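(* Let $S_{r,N}$ be an atomic exponential Puiseux semiring. Then $\mathsf{c}(S_{r,N})=0$ if $r\in\mathbb{N}$, and $\mathsf{c}(S_{r,N})=\max(\mathsf{n}(r),\mathsf{d}(r))^{\delta_0}$ if $r\notin\mathbb{N}$.
   Context: $\mathbb{N}=\{0,1,2,\dots\}$. A numerical monoid $N$ is an additive submonoid of $\mathbb{N}$ with finite complement in $\mathbb{N}$; let $s_0=0<s_1<\cdots$ be its elements and $\delta_0=s_1-s_0=s_1$ (the smallest positive element of $N$). For $r\in\mathbb{Q}_{>0}$ write $r=\mathsf{n}(r)/\mathsf{d}(r)$ in lowest terms. The exponential Puiseux semiring $S_{r,N}$ is the additive submonoid of $\mathbb{Q}_{\ge0}$ generated by $\{r^k:k\in N\}$ (equal to $\mathbb{N}$ if $r\in\mathbb{N}$; atomic for $r\notin\mathbb{N}$ iff $\mathsf{n}(r)>1$). For factorizations $z=\sum\alpha_a a$, $z'=\sum\beta_a a$ of an element of an atomic monoid, $\gcd(z,z')=\sum\min(\alpha_a,\beta_a)a$ and $\mathsf{d}(z,z')=\max(|z|,|z'|)-|\gcd(z,z')|$. The catenary degree $\mathsf{c}(x)$ is the least $n\in\mathbb{N}\cup\{\infty\}$ such that any two factorizations of $x$ are joined by a chain of factorizations of $x$ with consecutive distances at most $n$; $\mathsf{c}(M)=\sup_{x\in M}\mathsf{c}(x)$. *)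

theory Defs
  imports Complex_Main "HOL-Library.Multiset" "HOL-Library.Extended_Nat"
begin

definition numerical_monoid :: "nat set \<Rightarrow> bool" where
  "numerical_monoid N \<longleftrightarrow> 0 \<in> N \<and> (\<forall>a\<in>N. \<forall>b\<in>N. a + b \<in> N) \<and> finite (UNIV - N)"

definition delta0 :: "nat set \<Rightarrow> nat" where
  "delta0 N = (LEAST k. k \<in> N \<and> 0 < k)"

inductive_set gen_monoid :: "rat set \<Rightarrow> rat set" for G :: "rat set" where
  zero: "0 \<in> gen_monoid G"
| add_gen: "g \<in> G \<Longrightarrow> x \<in> gen_monoid G \<Longrightarrow> g + x \<in> gen_monoid G"

definition exp_puiseux :: "rat \<Rightarrow> nat set \<Rightarrow> rat set" where
  "exp_puiseux r N = gen_monoid {r ^ k | k. k \<in> N}"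

definition numer :: "rat \<Rightarrow> nat" where "numer r = nat (fst (quotient_of r))"
definition denom :: "rat \<Rightarrow> nat" where "denom r = nat (snd (quotient_of r))"

text \<open>Atoms of a submonoid M of Q_{>=0} (the only unit is 0).\<close>
definition atoms :: "rat set \<Rightarrow> rat set" where
  "atoms M = {a \<in> M. a \<noteq> 0 \<and> (\<forall>b\<in>M. \<forall>c\<in>M. a = b + c \<longrightarrow> b = 0 \<or> c = 0)}"

definition factorizations :: "rat set \<Rightarrow> rat \<Rightarrow> rat multiset set" where
  "factorizations M x = {z. set_mset z \<subseteq> atoms M \<and> sum_mset z = x}"

definition atomic :: "rat set \<Rightarrow> bool" where
  "atomic M \<longleftrightarrow> (\<forall>x\<in>M. x \<noteq> 0 \<longrightarrow> factorizations M x \<noteq> {})"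

definition fdist :: "rat multiset \<Rightarrow> rat multiset \<Rightarrow> nat" where
  "fdist z z' = max (size z) (size z') - size (z \<inter># z')"

definition has_chain :: "rat set \<Rightarrow> rat \<Rightarrow> enat \<Rightarrow> rat multiset \<Rightarrow> rat multiset \<Rightarrow> bool" where
  "has_chain M x n z z' \<longleftrightarrow> (\<exists>zs. zs \<noteq> [] \<and> hd zs = z \<and> last zs = z' \<and>
      set zs \<subseteq> factorizations M x \<and>
      (\<forall>i. Suc i < length zs \<longrightarrow> enat (fdist (zs ! i) (zs ! Suc i)) \<le> n))"

definition catenary_elem :: "rat set \<Rightarrow> rat \<Rightarrow> enat" where
  "catenary_elem M x = Inf {n. \<forall>z\<in>factorizations M x. \<forall>z'\<in>factorizations M x. has_chain M x n z z'}"

definition catenary_degree :: "rat set \<Rightarrow> enat" where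
  "catenary_degree M = (SUP x\<in>M. catenary_elem M x)"

end

theory Submission imports Defs begin

definition img :: "rat \<Rightarrow> nat multiset \<Rightarrow> rat multiset" where
  "img r Z = image_mset (\<lambda>k. r ^ k) Z"
definition val :: "rat \<Rightarrow> nat multiset \<Rightarrow> rat" where
  "val r Z = sum_mset (img r Z)"

lemma val_empty[simp]: "val r {#} = 0" by (simp add: val_def img_def)
lemma val_add[simp]: "val r (add_mset k Z) = r ^ k + val r Z" by (simp add: val_def img_def)
lemma val_plus[simp]: "val r (A + B) = val r A + val r B" by (simp add: val_def img_def)
lemma img_add[simp]: "img r (add_mset k Z) = add_mset (r ^ k) (img r Z)" by (simp add: img_def)
lemma img_plus[simp]: "img r (A + B) = img r A + img r B" by (simp add: img_def)
lemma size_img[simp]: "size (img r Z) = size Z" by (simp add: img_def)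
lemma val_rep[simp]: "val r (replicate_mset m k) = of_nat m * r ^ k"
  by (induction m) (auto simp: algebra_simps)
lemma img_rep[simp]: "img r (replicate_mset m k) = replicate_mset m (r ^ k)"
  by (simp add: img_def)

lemma val_nonneg: "r > 0 \<Longrightarrow> val r Z \<ge> 0"
  by (induction Z) auto

lemma val_pos: "r > 0 \<Longrightarrow> Z \<noteq> {#} \<Longrightarrow> val r Z > 0"
proof (induction Z)
  case empty then show ?case by simp
next
  case (add x Z) then show ?case using val_nonneg[of r Z] by (simp add: add_pos_nonneg)
qed

lemma gen_monoid_char:
  "x \<in> gen_monoid {r ^ k | k. k \<in> N} \<longleftrightarrow> (\<exists>Z. set_mset Z \<subseteq> N \<and> x = val r Z)"
proof
  assume "x \<in> gen_monoid {r ^ k | k. k \<in> N}"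
  then show "\<exists>Z. set_mset Z \<subseteq> N \<and> x = val r Z"
  proof induction
    case zero then show ?case by (intro exI[of _ "{#}"]) simp
  next
    case (add_gen g x)
    then obtain k Z where "k \<in> N" "g = r ^ k" "set_mset Z \<subseteq> N" "x = val r Z" by auto
    then show ?case by (intro exI[of _ "add_mset k Z"]) auto
  qed
next
  assume "\<exists>Z. set_mset Z \<subseteq> N \<and> x = val r Z"
  then obtain Z where Z: "set_mset Z \<subseteq> N" "x = val r Z" by auto
  have "set_mset Z \<subseteq> N \<Longrightarrow> val r Z \<in> gen_monoid {r ^ k | k. k \<in> N}"
  proof (induction Z)
    case empty then show ?case by (simp add: gen_monoid.zero)
  next
    case (add k Z) then show ?case by (auto intro!: gen_monoid.add_gen)
  qed
  with Z show "x \<in> gen_monoid {r ^ k | k. k \<in> N}" by simp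
qed

lemma mset_preimage:
  assumes "set_mset z \<subseteq> f ` A" shows "\<exists>Z. set_mset Z \<subseteq> A \<and> z = image_mset f Z"
  using assms
proof (induction z)
  case empty then show ?case by (intro exI[of _ "{#}"]) simp
next
  case (add x z)
  then obtain Z where "set_mset Z \<subseteq> A" "z = image_mset f Z" by auto
  moreover from add obtain k where "k \<in> A" "x = f k" by auto
  ultimately show ?case by (intro exI[of _ "add_mset k Z"]) auto
qed

lemma atoms_sub:
  assumes "M = exp_puiseux r N" "r > 0"
  shows "atoms M \<subseteq> {r ^ k | k. k \<in> N}"
proof
  fix a assume a: "a \<in> atoms M"
  then have "a \<in> gen_monoid {r ^ k | k. k \<in> N}" "a \<noteq> 0" using assms by (auto simp: atoms_def exp_puiseux_def)
  then show "a \<in> {r ^ k | k. k \<in> N}"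
  proof (cases rule: gen_monoid.cases)
    case zero then show ?thesis using \<open>a \<noteq> 0\<close> by simp
  next
    case (add_gen g x)
    have gM: "g \<in> M" using add_gen assms unfolding exp_puiseux_def
      using gen_monoid.add_gen[OF _ gen_monoid.zero, of g "{r ^ k | k. k \<in> N}"] by simp
    have xM: "x \<in> M" using add_gen assms unfolding exp_puiseux_def by simp
    have "g \<noteq> 0" using add_gen assms(2) by auto
    then have "x = 0" using a gM xM add_gen unfolding atoms_def by auto
    then show ?thesis using add_gen by simp
  qed
qed

lemma divL:
  assumes d: "d > 0" and r: "r = of_nat n / of_nat d" and W: "\<forall>k\<in>#W. k \<ge> e"
  shows "\<exists>A::int. \<exists>L. val r W * of_nat d ^ L = of_nat n ^ e * of_int A"
  using W
proof (induction W)
  case empty then show ?case by (intro exI[of _ 0]) simp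
next
  case (add k W)
  then obtain A L where AL: "val r W * of_nat d ^ L = of_nat n ^ e * of_int A" and ke: "k \<ge> e" by auto
  have rk: "r ^ k * of_nat d ^ k = of_nat n ^ k" using d r by (simp add: power_divide)
  have nk: "(of_nat n :: rat) ^ k = of_nat n ^ e * of_nat n ^ (k - e)" using ke
    by (metis le_add_diff_inverse power_add)
  have "val r (add_mset k W) * of_nat d ^ (L + k) = r ^ k * of_nat d ^ k * of_nat d ^ L + (val r W * of_nat d ^ L) * of_nat d ^ k"
    by (simp add: algebra_simps power_add)
  also have "\<dots> = of_nat n ^ e * of_int (int n ^ (k - e) * int d ^ L + A * int d ^ k)"
    by (simp add: rk AL nk algebra_simps)
  finally show ?case by blast
qed

lemma divL_int:
  assumes d: "d > 0" and r: "r = of_nat n / of_nat d" and W: "\<forall>k\<in>#W. k \<ge> e"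
    and cop: "coprime n d" and I: "val r W * of_nat d ^ j = of_int I"
  shows "int n ^ e dvd I"
proof -
  obtain A L where AL: "val r W * of_nat d ^ L = of_nat n ^ e * of_int A" using divL[OF d r W] by blast
  have "of_int (I * int d ^ L) = (of_int (int n ^ e * (A * int d ^ j)) :: rat)"
    using AL I by (simp add: algebra_simps) (metis AL mult.commute mult.left_commute)
  then have "I * int d ^ L = int n ^ e * (A * int d ^ j)" by (simp only: of_int_eq_iff)
  then have "int n ^ e dvd I * int d ^ L" by simp
  moreover have "coprime (int n ^ e) (int d ^ L)" using cop by simp
  ultimately show ?thesis using coprime_dvd_mult_left_iff by blast
qed

lemma lowL:
  assumes d: "d > 0" and r: "r = of_nat n / of_nat d" and W: "\<forall>k\<in>#W. k < j"
  shows "\<exists>m::nat. val r W * of_nat d ^ j = of_nat (d * m)"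
  using W
proof (induction W)
  case empty then show ?case by (intro exI[of _ 0]) simp
next
  case (add k W)
  then obtain m where m: "val r W * of_nat d ^ j = of_nat (d * m)" and kj: "k < j" by auto
  have jj: "j = k + 1 + (j - k - 1)" using kj by simp
  have dj: "(of_nat d :: rat) ^ j = of_nat d ^ k * of_nat d * of_nat d ^ (j - k - 1)"
    by (subst jj) (simp only: power_add power_one_right)
  have rk: "r ^ k * of_nat d ^ k = of_nat n ^ k" using d r by (simp add: power_divide)
  have "val r (add_mset k W) * of_nat d ^ j = (r ^ k * of_nat d ^ k) * of_nat d * of_nat d ^ (j - k - 1) + val r W * of_nat d ^ j"
    by (simp add: algebra_simps dj)
  also have "\<dots> = of_nat (d * (n ^ k * d ^ (j - k - 1) + m))" by (simp add: rk m algebra_simps)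
  finally show ?case by blast
qed

lemma notsum:
  assumes d2: "d \<ge> 2" and n2: "n \<ge> 2" and r: "r = of_nat n / of_nat d" and cop: "coprime n d"
    and sz: "size Z \<ge> 2" and eq: "val r Z = r ^ j"
  shows False
proof -
  have d: "d > 0" using d2 by simp
  have rpos: "r > 0" using r d n2 by simp
  show False
  proof (cases "j \<in># Z")
    case True
    then have "val r Z = r ^ j + val r (Z - {#j#})" by (metis val_add insert_DiffM)
    then have v0: "val r (Z - {#j#}) = 0" using eq by simp have "size (Z - {#j#}) = size Z - 1" using True by (simp add: size_Diff_submset)
    then have "Z - {#j#} \<noteq> {#}" using sz by auto
    with v0 show False using val_pos[OF rpos] by force
  next
    case False
    define Lo where "Lo = filter_mset (\<lambda>k. k < j) Z"
    define Hi where "Hi = filter_mset (\<lambda>k. \<not> k < j) Z"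
    have Z: "Z = Lo + Hi" unfolding Lo_def Hi_def by simp
    have Hij: "\<forall>k\<in>#Hi. k \<ge> j + 1" using False unfolding Hi_def
      by auto (metis Suc_eq_plus1 Suc_leI le_neq_implies_less not_le)
    obtain m where m: "val r Lo * of_nat d ^ j = of_nat (d * m)"
      using lowL[OF d r, of Lo j] unfolding Lo_def by auto
    have rj: "r ^ j * of_nat d ^ j = of_nat n ^ j" using d r by (simp add: power_divide)
    define I where "I = int n ^ j - int (d * m)"
    have HI: "val r Hi * of_nat d ^ j = of_int I"
    proof -
      have "val r Hi * of_nat d ^ j = r ^ j * of_nat d ^ j - val r Lo * of_nat d ^ j"
        using eq Z by (simp add: algebra_simps) (metis distrib_right)
      then show ?thesis unfolding I_def using rj m by simp
    qed
    have dvd: "int n ^ (j + 1) dvd I" using divL_int[OF d r Hij cop HI] .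
    have I0: "I \<ge> 0"
    proof -
      have "val r Hi * of_nat d ^ j \<ge> 0" using val_nonneg[OF rpos, of Hi] by simp
      then show ?thesis using HI by simp
    qed
    have "I = 0"
    proof (rule ccontr)
      assume "I \<noteq> 0"
      then have "int n ^ (j + 1) \<le> I" using dvd I0 by (simp add: zdvd_imp_le)
      moreover have "I \<le> int n ^ j" unfolding I_def by simp
      moreover have "int n ^ j < int n ^ (j + 1)" using n2 by simp
      ultimately show False by simp
    qed
    then have "int n ^ j = int d * int m" unfolding I_def by simp
    then have "int d dvd int n ^ j" by simp
    moreover have "coprime (int d) (int n ^ j)" using cop by (simp add: coprime_commute)
    ultimately have "is_unit (int d)" by (meson coprime_common_divisor dvd_refl)
    then show False using d2 by simp
  qed
qed

lemma atoms_eq: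
  assumes d2: "d \<ge> 2" and n2: "n \<ge> 2" and r: "r = of_nat n / of_nat d" and cop: "coprime n d"
  shows "atoms (exp_puiseux r N) = {r ^ k | k. k \<in> N}"
proof
  have rpos: "r > 0" using r d2 n2 by simp
  show "atoms (exp_puiseux r N) \<subseteq> {r ^ k | k. k \<in> N}" using atoms_sub[OF HOL.refl rpos] .
  show "{r ^ k | k. k \<in> N} \<subseteq> atoms (exp_puiseux r N)"
  proof
    fix a assume "a \<in> {r ^ k | k. k \<in> N}"
    then obtain j where j: "j \<in> N" "a = r ^ j" by auto
    have aM: "a \<in> exp_puiseux r N" unfolding exp_puiseux_def gen_monoid_char
      using j by (intro exI[of _ "{#j#}"]) simp
    have "a \<noteq> 0" using j rpos by simp
    moreover have "\<forall>b\<in>exp_puiseux r N. \<forall>c\<in>exp_puiseux r N. a = b + c \<longrightarrow> b = 0 \<or> c = 0"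
    proof (intro ballI impI)
      fix b c assume "b \<in> exp_puiseux r N" "c \<in> exp_puiseux r N" and abc: "a = b + c"
      then obtain B C where B: "b = val r B" and C: "c = val r C"
        unfolding exp_puiseux_def gen_monoid_char by auto
      show "b = 0 \<or> c = 0"
      proof (rule ccontr)
        assume "\<not> (b = 0 \<or> c = 0)"
        then have "B \<noteq> {#}" "C \<noteq> {#}" using B C by auto
        then have "size B \<noteq> 0" "size C \<noteq> 0" by auto
        then have "size (B + C) \<ge> 2" by (simp only: size_union)
        moreover have "val r (B + C) = r ^ j" using abc B C j by simp
        ultimately show False using notsum[OF d2 n2 r cop] by blast
      qed
    qed
    ultimately show "a \<in> atoms (exp_puiseux r N)" using aM unfolding atoms_def by blast
  qed
qed

inductive ch :: "rat \<Rightarrow> nat set \<Rightarrow> nat \<Rightarrow> nat multiset \<Rightarrow> nat multiset \<Rightarrow> bool" for r N K where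
  refl: "ch r N K Z Z"
| step: "fdist (img r Z) (img r Y) \<le> K \<Longrightarrow> set_mset Y \<subseteq> N \<Longrightarrow> val r Y = val r Z \<Longrightarrow> ch r N K Y Z'
     \<Longrightarrow> ch r N K Z Z'"

lemma ch_val: "ch r N K Z Z' \<Longrightarrow> val r Z' = val r Z \<and> (set_mset Z \<subseteq> N \<longrightarrow> set_mset Z' \<subseteq> N)"
  by (induction rule: ch.induct) auto

lemma ch_trans: "ch r N K Z Y \<Longrightarrow> ch r N K Y W \<Longrightarrow> ch r N K Z W"
  by (induction rule: ch.induct) (auto intro: ch.step)

lemma fdist_sym: "fdist a b = fdist b a"
  unfolding fdist_def by (simp add: max.commute multiset_inter_commute)

lemma ch_one: "fdist (img r Z) (img r Y) \<le> K \<Longrightarrow> set_mset Y \<subseteq> N \<Longrightarrow> val r Y = val r Z \<Longrightarrow> ch r N K Z Y"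
  by (rule ch.step[OF _ _ _ ch.refl])

lemma ch_sym: "ch r N K Z Z' \<Longrightarrow> set_mset Z \<subseteq> N \<Longrightarrow> ch r N K Z' Z"
proof (induction rule: ch.induct)
  case (refl Z) show ?case by (rule ch.refl)
next
  case (step Z Y Z')
  have "ch r N K Y Z" using step by (intro ch_one) (auto simp: fdist_sym)
  then show ?case using step ch_trans by blast
qed

lemma ch_lift: "ch r N K Z Z' \<Longrightarrow> k \<in> N \<Longrightarrow> ch r N K (add_mset k Z) (add_mset k Z')"
proof (induction rule: ch.induct)
  case (refl Z) show ?case by (rule ch.refl)
next
  case (step Z Y Z')
  have "fdist (img r (add_mset k Z)) (img r (add_mset k Y)) = fdist (img r Z) (img r Y)"
    unfolding fdist_def by simp
  show ?case
  proof (rule ch.step[where Y="add_mset k Y"])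
    show "fdist (img r (add_mset k Z)) (img r (add_mset k Y)) \<le> K"
      using step.hyps(1) \<open>fdist (img r (add_mset k Z)) (img r (add_mset k Y)) = fdist (img r Z) (img r Y)\<close> by simp
    show "set_mset (add_mset k Y) \<subseteq> N" using step.hyps(2) step.prems by simp
    show "val r (add_mset k Y) = val r (add_mset k Z)" using step.hyps(3) by simp
    show "ch r N K (add_mset k Y) (add_mset k Z')" using step.IH step.prems by blast
  qed
qed

lemma ch_has_chain:
  assumes "ch r N K Z Z'" "set_mset Z \<subseteq> N" and at: "\<forall>k\<in>N. r ^ k \<in> atoms M"
  shows "has_chain M (val r Z) (enat K) (img r Z) (img r Z')"
  using assms(1,2)
proof (induction rule: ch.induct)
  case (refl Z)
  have "img r Z \<in> factorizations M (val r Z)"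
    using refl at unfolding factorizations_def val_def img_def by auto
  then show ?case unfolding has_chain_def by (intro exI[of _ "[img r Z]"]) auto
next
  case (step Z Y Z')
  then obtain zs where zs: "zs \<noteq> []" "hd zs = img r Y" "last zs = img r Z'"
      "set zs \<subseteq> factorizations M (val r Z)"
      "\<forall>i. Suc i < length zs \<longrightarrow> enat (fdist (zs ! i) (zs ! Suc i)) \<le> enat K"
    unfolding has_chain_def by auto
  have f: "img r Z \<in> factorizations M (val r Z)"
    using step at unfolding factorizations_def val_def img_def by auto
  have "\<forall>i. Suc i < length (img r Z # zs) \<longrightarrow> enat (fdist ((img r Z # zs) ! i) ((img r Z # zs) ! Suc i)) \<le> enat K"
  proof (intro allI impI)
    fix i assume i: "Suc i < length (img r Z # zs)"
    show "enat (fdist ((img r Z # zs) ! i) ((img r Z # zs) ! Suc i)) \<le> enat K"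
    proof (cases i)
      case 0 then show ?thesis using zs(1,2) step(1) by (simp add: hd_conv_nth)
    next
      case (Suc i') then show ?thesis using zs(5) i by simp
    qed
  qed
  then show ?case unfolding has_chain_def using zs f by (intro exI[of _ "img r Z # zs"]) auto
qed

definition mu :: "nat \<Rightarrow> nat \<Rightarrow> nat multiset \<Rightarrow> nat" where
  "mu d J Z = sum_mset (image_mset (\<lambda>k. (d + 1) ^ (J - k)) Z)"

lemma mu_plus[simp]: "mu d J (A + B) = mu d J A + mu d J B" by (simp add: mu_def)
lemma mu_add[simp]: "mu d J (add_mset k A) = (d + 1) ^ (J - k) + mu d J A" by (simp add: mu_def)
lemma mu_rep[simp]: "mu d J (replicate_mset m k) = m * (d + 1) ^ (J - k)" by (simp add: mu_def)

lemma trade_step: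
  assumes d2: "d \<ge> 2" and n2: "n \<ge> 2" and r: "r = of_nat n / of_nat d" and cop: "coprime n d"
    and addN: "\<forall>a\<in>N. \<forall>b\<in>N. a + b \<in> N" and eN: "e \<in> N" "e > 0"
    and ZN: "set_mset Z \<subseteq> N" and Z'N: "set_mset Z' \<subseteq> N" and eq: "val r Z = val r Z'"
    and disj: "Z \<inter># Z' = {#}" and iZ': "i \<in># Z'" and mn: "\<forall>k\<in>#Z + Z'. i \<le> k"
    and bd: "\<forall>k\<in>#Z + Z'. k \<le> J"
  shows "\<exists>Z''. set_mset Z'' \<subseteq> N \<and> val r Z'' = val r Z' \<and> (\<forall>k\<in>#Z''. k \<le> J) \<and>
           mu d J Z'' < mu d J Z' \<and> fdist (img r Z') (img r Z'') \<le> max n d ^ e"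
proof -
  have d: "d > 0" using d2 by simp
  have rpos: "r > 0" using r d2 n2 by simp
  have iN: "i \<in> N" using iZ' Z'N by auto
  have ex: "\<exists>t. 0 < t \<and> i + t \<in> N" using eN iN addN by blast
  define s where "s = (LEAST t. 0 < t \<and> i + t \<in> N)"
  have s: "0 < s" "i + s \<in> N" using LeastI_ex[OF ex] unfolding s_def by auto
  have se: "s \<le> e" unfolding s_def using eN iN addN by (intro Least_le) auto
  have gap: "\<And>t. 0 < t \<Longrightarrow> t < s \<Longrightarrow> i + t \<notin> N" unfolding s_def using not_less_Least by blast
  have above: "\<And>k. k \<in> N \<Longrightarrow> i \<le> k \<Longrightarrow> k \<noteq> i \<Longrightarrow> i + s \<le> k"
  proof (rule ccontr)
    fix k assume k: "k \<in> N" "i \<le> k" "k \<noteq> i" "\<not> i + s \<le> k"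
    then have "0 < k - i" "k - i < s" by auto
    then have "i + (k - i) \<notin> N" by (rule gap)
    then show False using k by simp
  qed
  have Zne: "Z \<noteq> {#}"
  proof
    assume "Z = {#}"
    then have "val r Z' = 0" using eq by simp
    moreover have "Z' \<noteq> {#}" using iZ' by auto
    ultimately show False using val_pos[OF rpos, of Z'] by simp
  qed
  have Zab: "\<forall>k\<in>#Z. i + s \<le> k"
  proof
    fix k assume k: "k \<in># Z"
    have "k \<noteq> i"
    proof
      assume "k = i"
      then have "i \<in># Z \<inter># Z'" using k iZ' by simp
      then show False using disj by simp
    qed
    then show "i + s \<le> k" using above[of k] k ZN mn by auto
  qed
  have isJ: "i + s \<le> J"
  proof -
    obtain k where "k \<in># Z" using Zne by auto
    then have "i + s \<le> k" "k \<le> J" using Zab bd by auto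
    then show ?thesis by simp
  qed
  define c where "c = count Z' i"
  define Z1 where "Z1 = filter_mset (\<lambda>k. k \<noteq> i) Z'"
  have Zsplit: "Z' = replicate_mset c i + Z1"
    unfolding c_def Z1_def by (metis filter_eq_replicate_mset multiset_partition)
  have Z1ab: "\<forall>k\<in>#Z1. i + s \<le> k"
    unfolding Z1_def using above Z'N mn by auto
  have cpos: "c > 0" using iZ' unfolding c_def by simp
  obtain A1 L1 where A1: "val r Z * of_nat d ^ L1 = of_nat n ^ (i + s) * of_int A1"
    using divL[OF d r Zab] by blast
  obtain A2 L2 where A2: "val r Z1 * of_nat d ^ L2 = of_nat n ^ (i + s) * of_int A2"
    using divL[OF d r Z1ab] by blast
  have rk: "r ^ i * of_nat d ^ i = of_nat n ^ i" using d r by (simp add: power_divide)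
  have c1: "of_nat c * r ^ i = val r Z - val r Z1" using eq Zsplit by (metis add_diff_cancel_right' val_plus val_rep)
  have "of_nat c * of_nat n ^ i * of_nat d ^ L1 * of_nat d ^ L2
        = (val r Z - val r Z1) * of_nat d ^ i * of_nat d ^ L1 * of_nat d ^ L2"
    by (simp add: c1[symmetric] rk[symmetric] algebra_simps)
  also have "\<dots> = (val r Z * of_nat d ^ L1) * of_nat d ^ L2 * of_nat d ^ i - (val r Z1 * of_nat d ^ L2) * of_nat d ^ L1 * of_nat d ^ i"
    by (simp add: algebra_simps)
  also have "\<dots> = of_nat n ^ (i + s) * (of_int A1 * of_nat d ^ L2 * of_nat d ^ i - of_int A2 * of_nat d ^ L1 * of_nat d ^ i)"
    by (simp add: A1 A2 algebra_simps)
  finally have "of_int (int c * int n ^ i * int d ^ L1 * int d ^ L2)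
      = (of_int (int n ^ i * (int n ^ s * (A1 * int d ^ L2 * int d ^ i - A2 * int d ^ L1 * int d ^ i))) :: rat)"
    by (simp add: power_add algebra_simps)
  then have "int c * int n ^ i * int d ^ L1 * int d ^ L2 = int n ^ i * (int n ^ s * (A1 * int d ^ L2 * int d ^ i - A2 * int d ^ L1 * int d ^ i))"
    by (simp only: of_int_eq_iff)
  then have "int n ^ i * (int c * (int d ^ L1 * int d ^ L2)) = int n ^ i * (int n ^ s * (A1 * int d ^ L2 * int d ^ i - A2 * int d ^ L1 * int d ^ i))"
    by (simp add: algebra_simps)
  moreover have "int n ^ i \<noteq> 0" using n2 by simp
  ultimately have "int c * (int d ^ L1 * int d ^ L2) = int n ^ s * (A1 * int d ^ L2 * int d ^ i - A2 * int d ^ L1 * int d ^ i)"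
    using mult_left_cancel by blast
  then have "int n ^ s dvd int c * (int d ^ L1 * int d ^ L2)" by (metis dvd_triv_left)
  moreover have "coprime (int n ^ s) (int d ^ L1 * int d ^ L2)" using cop by simp
  ultimately have "int n ^ s dvd int c" using coprime_dvd_mult_left_iff by blast
  then have cge: "n ^ s \<le> c" using cpos by (metis int_dvd_int_iff of_nat_power dvd_imp_le)
  define R where "R = replicate_mset (n ^ s) i"
  have Rsub: "R \<subseteq># Z'" unfolding R_def using cge c_def
    by (simp add: count_le_replicate_mset_subset_eq)
  define W where "W = Z' - R"
  have ZW: "Z' = W + R" unfolding W_def using Rsub by simp
  define Z'' where "Z'' = W + replicate_mset (d ^ s) (i + s)"
  have trade: "of_nat (d ^ s) * r ^ (i + s) = of_nat (n ^ s) * r ^ i"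
    using d r by (simp add: power_add power_divide)
  have v: "val r Z'' = val r Z'"
  proof -
    have "val r Z' = val r W + val r R" using ZW by (metis val_plus)
    then show ?thesis unfolding Z''_def using trade by (simp add: R_def)
  qed
  have WZ: "\<forall>k\<in>#W. k \<in># Z'" unfolding W_def by (auto dest: in_diffD)
  have setN: "set_mset Z'' \<subseteq> N" unfolding Z''_def using WZ Z'N s(2) by auto
  have bdZ: "\<forall>k\<in>#Z''. k \<le> J" unfolding Z''_def using WZ bd isJ by auto
  have pw: "(d + 1) ^ (J - i) = (d + 1) ^ s * (d + 1) ^ (J - (i + s))"
  proof -
    have "J - i = s + (J - (i + s))" using isJ by simp
    then show ?thesis by (metis power_add)
  qed
  have "d ^ s < (d + 1) ^ s" using s(1) by (simp add: power_strict_mono)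
  moreover have X: "(d + 1) ^ (J - (i + s)) > 0" by simp
  ultimately have "d ^ s * (d + 1) ^ (J - (i + s)) < (d + 1) ^ s * (d + 1) ^ (J - (i + s))"
    by simp
  also have "\<dots> \<le> n ^ s * ((d + 1) ^ s * (d + 1) ^ (J - (i + s)))" using n2 by simp
  finally have "d ^ s * (d + 1) ^ (J - (i + s)) < n ^ s * (d + 1) ^ (J - i)" using pw by simp
  moreover have "mu d J Z' = mu d J W + mu d J R" using ZW by (metis mu_plus)
  ultimately have mud: "mu d J Z'' < mu d J Z'" unfolding Z''_def by (simp add: R_def)
  define C where "C = img r W"
  have i1: "img r Z' = C + replicate_mset (n ^ s) (r ^ i)" unfolding C_def using ZW by (metis img_plus img_rep R_def)
  have i2: "img r Z'' = C + replicate_mset (d ^ s) (r ^ (i + s))" unfolding C_def Z''_def by simp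
  have "C \<subseteq># img r Z' \<inter># img r Z''" unfolding i1 i2 by simp
  then have "size C \<le> size (img r Z' \<inter># img r Z'')" by (rule size_mset_mono)
  then have "fdist (img r Z') (img r Z'') \<le> max (n ^ s) (d ^ s)"
    unfolding fdist_def i1 i2 by simp
  also have "max (n ^ s) (d ^ s) = max n d ^ s"
  proof (cases "n \<le> d")
    case True then show ?thesis by (simp add: max_def power_mono)
  next
    case False then have "d ^ s \<le> n ^ s" by (simp add: power_mono)
    then show ?thesis using False by (simp add: max_def)
  qed
  also have "\<dots> \<le> max n d ^ e" using se n2 by (intro power_increasing) auto
  finally show ?thesis using setN v bdZ mud by blast
qed

lemma upper_ch:
  assumes d2: "d \<ge> 2" and n2: "n \<ge> 2" and r: "r = of_nat n / of_nat d" and cop: "coprime n d"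
    and addN: "\<forall>a\<in>N. \<forall>b\<in>N. a + b \<in> N" and eN: "e \<in> N" "e > 0"
  shows "set_mset Z \<subseteq> N \<Longrightarrow> set_mset Z' \<subseteq> N \<Longrightarrow> val r Z = val r Z' \<Longrightarrow>
         \<forall>k\<in>#Z + Z'. k \<le> J \<Longrightarrow> ch r N (max n d ^ e) Z Z'"
proof -
  have main: "\<forall>Z Z'. mu d J Z + mu d J Z' = m \<longrightarrow> set_mset Z \<subseteq> N \<longrightarrow> set_mset Z' \<subseteq> N \<longrightarrow>
      val r Z = val r Z' \<longrightarrow> (\<forall>k\<in>#Z + Z'. k \<le> J) \<longrightarrow> ch r N (max n d ^ e) Z Z'" for m
  proof (induction m rule: less_induct)
    case (less m)
    show ?case
    proof (intro allI impI)
      fix Z Z' assume m: "mu d J Z + mu d J Z' = m" and ZN: "set_mset Z \<subseteq> N" and Z'N: "set_mset Z' \<subseteq> N"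
        and eq: "val r Z = val r Z'" and bd: "\<forall>k\<in>#Z + Z'. k \<le> J"
      show "ch r N (max n d ^ e) Z Z'"
      proof (cases "Z = Z'")
        case True then show ?thesis by (simp add: ch.refl)
      next
        case neq: False
        show ?thesis
        proof (cases "\<exists>k. k \<in># Z \<and> k \<in># Z'")
          case True
          then obtain k where k: "k \<in># Z" "k \<in># Z'" by blast
          define Z0 where "Z0 = Z - {#k#}"
          define Z0' where "Z0' = Z' - {#k#}"
          have Z: "Z = add_mset k Z0" unfolding Z0_def using k by simp
          have Z': "Z' = add_mset k Z0'" unfolding Z0'_def using k by simp
          have "mu d J Z0 + mu d J Z0' < m" using m Z Z' by (metis mu_add add_less_mono zero_less_power zero_less_Suc Suc_eq_plus1 less_add_same_cancel2 add.assoc add.left_commute)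
          moreover have "set_mset Z0 \<subseteq> N" "set_mset Z0' \<subseteq> N" using ZN Z'N Z Z' by auto
          moreover have "val r Z0 = val r Z0'" using eq Z Z' by simp
          moreover have "\<forall>k\<in>#Z0 + Z0'. k \<le> J" using bd Z Z' by auto
          ultimately have "ch r N (max n d ^ e) Z0 Z0'" using less by blast
          then have "ch r N (max n d ^ e) (add_mset k Z0) (add_mset k Z0')"
            using ch_lift k ZN by blast
          then show ?thesis using Z Z' by simp
        next
          case False
          then have disj: "Z \<inter># Z' = {#}" by (simp add: multiset_eq_iff) (metis count_eq_zero_iff min_0L min_0R)
          have ne: "set_mset (Z + Z') \<noteq> {}" using neq by auto
          define i where "i = Min (set_mset (Z + Z'))"
          have iin: "i \<in># Z + Z'" unfolding i_def using Min_in[OF _ ne] by simp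
          have mn: "\<forall>k\<in>#Z + Z'. i \<le> k" unfolding i_def by simp
          show ?thesis
          proof (cases "i \<in># Z'")
            case True
            obtain Z'' where Z'': "set_mset Z'' \<subseteq> N" "val r Z'' = val r Z'" "\<forall>k\<in>#Z''. k \<le> J"
              "mu d J Z'' < mu d J Z'" "fdist (img r Z') (img r Z'') \<le> max n d ^ e"
              using trade_step[OF d2 n2 r cop addN eN ZN Z'N eq disj True mn bd] by blast
            have "ch r N (max n d ^ e) Z Z''"
              using less[rule_format, of "mu d J Z + mu d J Z''" Z Z''] m Z'' ZN eq bd by auto
            moreover have "ch r N (max n d ^ e) Z'' Z'"
              using Z'' Z'N by (intro ch_one) (auto simp: fdist_sym)
            ultimately show ?thesis using ch_trans by blast
          next
            case False
            then have iZ: "i \<in># Z" using iin by auto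
            have disj': "Z' \<inter># Z = {#}" using disj by (simp add: multiset_inter_commute)
            have mn': "\<forall>k\<in>#Z' + Z. i \<le> k" using mn by auto
            have bd': "\<forall>k\<in>#Z' + Z. k \<le> J" using bd by auto
            obtain Z'' where Z'': "set_mset Z'' \<subseteq> N" "val r Z'' = val r Z" "\<forall>k\<in>#Z''. k \<le> J"
              "mu d J Z'' < mu d J Z" "fdist (img r Z) (img r Z'') \<le> max n d ^ e"
              using trade_step[OF d2 n2 r cop addN eN Z'N ZN eq[symmetric] disj' iZ mn' bd'] by blast
            have "ch r N (max n d ^ e) Z'' Z'"
              using less[rule_format, of "mu d J Z'' + mu d J Z'" Z'' Z'] m Z'' Z'N eq bd by auto
            moreover have "ch r N (max n d ^ e) Z Z''"
              using Z'' by (intro ch_one) auto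
            ultimately show ?thesis using ch_trans by blast
          qed
        qed
      qed
    qed
  qed
  show "set_mset Z \<subseteq> N \<Longrightarrow> set_mset Z' \<subseteq> N \<Longrightarrow> val r Z = val r Z' \<Longrightarrow>
         \<forall>k\<in>#Z + Z'. k \<le> J \<Longrightarrow> ch r N (max n d ^ e) Z Z'"
    using main by blast
qed

lemma pow_inj:
  fixes r :: rat assumes "r > 0" "r \<noteq> 1"
  shows "r ^ k = r ^ j \<longleftrightarrow> k = j"
proof (cases "r > 1")
  case True then show ?thesis by (simp add: power_inject_exp)
next
  case False
  then have r1: "1 < 1 / r" using assms by (simp add: less_divide_eq)
  have "r ^ k = r ^ j \<longleftrightarrow> (1 / r) ^ k = (1 / r) ^ j"
    by (simp add: power_one_over)
  also have "\<dots> \<longleftrightarrow> k = j" using r1 by (simp add: power_inject_exp)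
  finally show ?thesis .
qed

lemma val_le_size:
  "\<forall>k\<in>#W. r ^ k \<le> b \<Longrightarrow> val r W \<le> of_nat (size W) * b"
  by (induction W) (auto simp: algebra_simps add_mono)

lemma lower_dist:
  assumes d2: "d \<ge> 2" and n2: "n \<ge> 2" and r: "r = of_nat n / of_nat d" and cop: "coprime n d"
    and eN: "e > 0" and emin: "\<forall>k\<in>N. k \<noteq> 0 \<longrightarrow> e \<le> k"
    and w: "w \<in> factorizations (exp_puiseux r N) (of_nat (n ^ e))"
    and wne: "w \<noteq> replicate_mset (n ^ e) 1"
  shows "max n d ^ e \<le> fdist (replicate_mset (n ^ e) 1) w"
proof -
  have d: "d > 0" using d2 by simp
  have rpos: "r > 0" using r d2 n2 by simp
  have r1: "r \<noteq> 1"
  proof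
    assume "r = 1"
    then have "n = d" using r d by (simp add: divide_eq_1_iff)
    then show False using cop d2 by simp
  qed
  have "set_mset w \<subseteq> (\<lambda>k. r ^ k) ` N"
    using w atoms_sub[OF HOL.refl rpos, of N] unfolding factorizations_def by blast
  then obtain W where WN: "set_mset W \<subseteq> N" and wW: "w = img r W"
    using mset_preimage unfolding img_def by blast
  have vW: "val r W = of_nat (n ^ e)" using w wW unfolding factorizations_def val_def by simp
  define c where "c = count W 0"
  define W1 where "W1 = filter_mset (\<lambda>k. k \<noteq> 0) W"
  have Wsplit: "W = replicate_mset c 0 + W1"
    unfolding c_def W1_def by (metis filter_eq_replicate_mset multiset_partition)
  have W1e: "\<forall>k\<in>#W1. e \<le> k" unfolding W1_def using WN emin by auto
  have v1: "val r W1 = of_nat (n ^ e) - of_nat c" using vW Wsplit by (metis add_diff_cancel_left' val_plus val_rep power_0 mult.right_neutral)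
  have "val r W1 * of_nat d ^ 0 = of_int (int n ^ e - int c)" using v1 by simp
  then have dv: "int n ^ e dvd int n ^ e - int c" using divL_int[OF d r W1e cop] by blast
  have cle: "c \<le> n ^ e"
  proof -
    have "val r W1 \<ge> 0" using val_nonneg[OF rpos] .
    then have "(of_nat c :: rat) \<le> of_nat (n ^ e)" using v1 by simp
    then show ?thesis by (simp only: of_nat_le_iff)
  qed
  have c0: "c = 0"
  proof (rule ccontr)
    assume "c \<noteq> 0"
    have "int n ^ e dvd int n ^ e - (int n ^ e - int c)" using dvd_diff[OF dvd_refl dv] .
    then have "int n ^ e dvd int c" by simp
    then have "n ^ e dvd c" by (metis int_dvd_int_iff of_nat_power)
    then have "c = n ^ e" using cle \<open>c \<noteq> 0\<close> by (meson dvd_imp_le le_antisym not_gr0)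
    then have "val r W1 = 0" using v1 by simp
    then have "W1 = {#}" using val_pos[OF rpos] by fastforce
    then have "w = replicate_mset (n ^ e) 1" using wW Wsplit \<open>c = n ^ e\<close> by simp
    then show False using wne by simp
  qed
  have Wge: "\<forall>k\<in>#W. e \<le> k"
  proof
    fix k assume k: "k \<in># W"
    then have "k \<noteq> 0" using c0 unfolding c_def by (metis count_eq_zero_iff)
    then show "e \<le> k" using emin WN k by auto
  qed
  have no1: "count w 1 = 0"
  proof (rule ccontr)
    assume "count w 1 \<noteq> 0"
    then have "1 \<in># w" by (simp add: count_eq_zero_iff)
    then obtain k where "k \<in># W" "r ^ k = 1" using wW unfolding img_def by auto
    then have "k = 0" using pow_inj[OF rpos r1, of k 0] by simp
    then show False using \<open>k \<in># W\<close> Wge eN by fastforce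
  qed
  have "replicate_mset (n ^ e) 1 \<inter># w = {#}"
    by (rule multiset_eqI) (simp add: no1)
  then have fd: "fdist (replicate_mset (n ^ e) 1) w = max (n ^ e) (size w)"
    unfolding fdist_def by simp
  show ?thesis
  proof (cases "d \<le> n")
    case True
    then show ?thesis using fd by (simp add: max_def)
  next
    case False
    have rl: "r < 1" using False r d by simp
    have "\<forall>k\<in>#W. r ^ k \<le> r ^ e" using Wge rl rpos by (auto intro: power_decreasing)
    then have "val r W \<le> of_nat (size W) * r ^ e" by (rule val_le_size)
    then have "of_nat (n ^ e) \<le> of_nat (size W) * (of_nat n ^ e / of_nat d ^ e :: rat)"
      using vW r by (simp add: power_divide)
    then have "of_nat (n ^ e) * of_nat d ^ e \<le> of_nat (size W) * of_nat n ^ e * (of_nat d ^ e :: rat) / of_nat d ^ e"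
      using d by (simp add: field_simps)
    then have "of_nat (n ^ e) * of_nat (d ^ e) \<le> (of_nat (size W * n ^ e) :: rat)" using d by simp
    then have "n ^ e * d ^ e \<le> size W * n ^ e" by (simp only: of_nat_mult[symmetric] of_nat_le_iff)
    then have "d ^ e \<le> size W" using n2 by (simp add: mult.commute)
    then show ?thesis using fd False wW by (simp add: max_def)
  qed
qed

lemma cat_lower:
  assumes z: "z \<in> factorizations M x" and z': "z' \<in> factorizations M x" and ne: "z \<noteq> z'"
    and far: "\<forall>w\<in>factorizations M x. w \<noteq> z \<longrightarrow> K \<le> fdist z w"
  shows "enat K \<le> catenary_elem M x"
  unfolding catenary_elem_def
proof (rule Inf_greatest)
  fix m assume "m \<in> {n. \<forall>z\<in>factorizations M x. \<forall>z'\<in>factorizations M x. has_chain M x n z z'}"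
  then have "has_chain M x m z z'" using z z' by blast
  then obtain zs where zs: "zs \<noteq> []" "hd zs = z" "last zs = z'" "set zs \<subseteq> factorizations M x"
      "\<forall>i. Suc i < length zs \<longrightarrow> enat (fdist (zs ! i) (zs ! Suc i)) \<le> m"
    unfolding has_chain_def by blast
  have ex: "\<exists>j. j < length zs \<and> zs ! j \<noteq> z" using zs ne
    by (intro exI[of _ "length zs - 1"]) (simp add: last_conv_nth)
  define j where "j = (LEAST j. j < length zs \<and> zs ! j \<noteq> z)"
  have j: "j < length zs" "zs ! j \<noteq> z" using LeastI_ex[OF ex] unfolding j_def by auto
  have j0: "j \<noteq> 0" using j zs by (metis hd_conv_nth)
  have prev: "zs ! (j - 1) = z"
  proof (rule ccontr)
    assume "zs ! (j - 1) \<noteq> z"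
    moreover have "j - 1 < length zs" using j by simp
    ultimately have "(LEAST j. j < length zs \<and> zs ! j \<noteq> z) \<le> j - 1" by (intro Least_le) simp
    then have "j \<le> j - 1" unfolding j_def .
    then show False using j0 by simp
  qed
  have "zs ! j \<in> factorizations M x" using j zs(4) by (meson nth_mem subsetD)
  then have "K \<le> fdist z (zs ! j)" using far j by blast
  moreover have "enat (fdist (zs ! (j - 1)) (zs ! Suc (j - 1))) \<le> m" using zs(5) j j0
    by (metis Suc_pred' not_gr0)
  ultimately show "enat K \<le> m" using prev j0 by (metis Suc_pred' not_gr0 order_trans enat_ord_simps(1))
qed

lemma cat_upper:
  assumes "\<forall>z\<in>factorizations M x. \<forall>z'\<in>factorizations M x. has_chain M x (enat K) z z'"
  shows "catenary_elem M x \<le> enat K"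
  unfolding catenary_elem_def using assms by (intro Inf_lower) simp

theorem mainTheorem8:
  fixes r :: rat and N :: "nat set"
  assumes "numerical_monoid N" and "r > 0" and "atomic (exp_puiseux r N)"
  shows "(r \<in> \<nat> \<longrightarrow> catenary_degree (exp_puiseux r N) = 0) \<and>
         (r \<notin> \<nat> \<longrightarrow> catenary_degree (exp_puiseux r N) = enat (max (numer r) (denom r) ^ delta0 N))"
proof -
  define M where "M = exp_puiseux r N"
  have N0: "0 \<in> N" and addN: "\<forall>a\<in>N. \<forall>b\<in>N. a + b \<in> N" and fin: "finite (UNIV - N)"
    using assms(1) unfolding numerical_monoid_def by auto
  have rpos: "r > 0" by fact
  have MC: "\<And>x. x \<in> M \<longleftrightarrow> (\<exists>Z. set_mset Z \<subseteq> N \<and> x = val r Z)"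
    unfolding M_def exp_puiseux_def gen_monoid_char ..
  have natM: "of_nat j \<in> M" for j
    unfolding MC using N0 by (intro exI[of _ "replicate_mset j 0"]) simp
  show ?thesis
  proof (intro conjI impI)
    assume "r \<in> \<nat>"
    then obtain m where m: "r = of_nat m" by (auto elim: Nats_cases)
    have m1: "m \<ge> 1" using m rpos by simp
    have at1: "atoms M \<subseteq> {1}"
    proof
      fix a assume a: "a \<in> atoms M"
      then obtain k where k: "a = r ^ k" using atoms_sub[OF M_def rpos] by blast
      show "a \<in> {1}"
      proof (rule ccontr)
        assume "a \<notin> {1}"
        then have "m ^ k \<noteq> 1" using k m by (metis of_nat_power of_nat_1 singletonI)
        then have mk: "m ^ k \<ge> 2" using m1 by (metis One_nat_def Suc_1 Suc_leI le_neq_implies_less one_le_power)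
        have "a = of_nat 1 + of_nat (m ^ k - 1)" using k m mk by simp
        then have "of_nat 1 = (0::rat) \<or> of_nat (m ^ k - 1) = (0::rat)"
          using a natM unfolding atoms_def by blast
        moreover have "of_nat (m ^ k - 1) \<noteq> (0::rat)" using mk by (simp only: of_nat_eq_0_iff)
        moreover have "of_nat 1 \<noteq> (0::rat)" by simp
        ultimately show False by blast
      qed
    qed
    have uniq: "z = z'" if "z \<in> factorizations M x" "z' \<in> factorizations M x" for x z z'
    proof -
      have "z = replicate_mset (size z) 1" "z' = replicate_mset (size z') 1"
        using that at1 unfolding factorizations_def by (auto intro!: set_mset_subset_singletonD)
      moreover have "sum_mset z = x" "sum_mset z' = x" using that unfolding factorizations_def by auto
      ultimately have "(of_nat (size z) :: rat) = of_nat (size z')"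
        by (metis sum_mset_replicate_mset mult.right_neutral of_nat_id)
      then have "size z = size z'" by simp
      then show ?thesis using \<open>z = replicate_mset (size z) 1\<close> \<open>z' = replicate_mset (size z') 1\<close> by simp
    qed
    have "catenary_elem M x \<le> 0" for x
    proof -
      have "\<forall>z\<in>factorizations M x. \<forall>z'\<in>factorizations M x. has_chain M x (enat 0) z z'"
        using uniq unfolding has_chain_def by (intro ballI, intro exI[of _ "[_]"]) auto
      then show ?thesis using cat_upper[of M x 0] by (simp add: zero_enat_def)
    qed
    then have "catenary_degree M \<le> 0" unfolding catenary_degree_def by (intro SUP_least) auto
    then show "catenary_degree (exp_puiseux r N) = 0" unfolding M_def by simp
  next
    assume rN: "r \<notin> \<nat>"
    obtain a b where q: "quotient_of r = (a, b)" by (cases "quotient_of r")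
    have b0: "b > 0" using quotient_of_denom_pos[OF q] .
    have copab: "coprime a b" using quotient_of_coprime[OF q] .
    have rab: "r = of_int a / of_int b" using quotient_of_div[OF q] .
    have a0: "a > 0" using rpos rab b0 by (simp add: zero_less_divide_iff)
    define n where "n = nat a"
    define d where "d = nat b"
    have nd: "numer r = n" "denom r = d" unfolding numer_def denom_def n_def d_def q by simp_all
    have r: "r = of_nat n / of_nat d" unfolding n_def d_def using rab a0 b0 by simp
    have cop: "coprime n d" unfolding n_def d_def using copab a0 b0
      by (metis coprime_int_iff nat_0_le less_imp_le)
    have d2: "d \<ge> 2"
    proof (rule ccontr)
      assume "\<not> d \<ge> 2"
      moreover have "d > 0" unfolding d_def using b0 by simp
      ultimately have "d = 1" by simp
      then have "r = of_nat n" using r by simp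
      then show False using rN by simp
    qed
    obtain k0 where k0: "UNIV - N \<subseteq> {..<k0}" using finite_nat_bounded[OF fin] by blast
    have exe: "\<exists>k. k \<in> N \<and> 0 < k" using k0 by (intro exI[of _ "Suc k0"]) auto
    define e where "e = delta0 N"
    have eN: "e \<in> N" "0 < e" using LeastI_ex[OF exe] unfolding e_def delta0_def by auto
    have emin: "\<forall>k\<in>N. k \<noteq> 0 \<longrightarrow> e \<le> k" unfolding e_def delta0_def by (auto intro: Least_le)
    have n2: "n \<ge> 2"
    proof (rule ccontr)
      assume "\<not> n \<ge> 2"
      moreover have "n > 0" unfolding n_def using a0 by simp
      ultimately have n1: "n = 1" by simp
      have noat: "atoms M = {}"
      proof (rule ccontr)
        assume "atoms M \<noteq> {}"
        then obtain x where x: "x \<in> atoms M" by blast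
        then obtain j where j: "j \<in> N" "x = r ^ j" using atoms_sub[OF M_def rpos] by blast
        have jeN: "j + e \<in> N" using j eN addN by blast
        have de: "of_nat (d ^ e) * r ^ (j + e) = r ^ j"
          using r n1 d2 by (simp add: power_add power_divide)
        have bM: "r ^ (j + e) \<in> M" unfolding MC using jeN by (intro exI[of _ "{#j + e#}"]) simp
        have cM: "of_nat (d ^ e - 1) * r ^ (j + e) \<in> M" unfolding MC using jeN
          by (intro exI[of _ "replicate_mset (d ^ e - 1) (j + e)"]) simp
        have dpos: "d ^ e \<ge> 2" using d2 eN by (metis le_trans self_le_power less_imp_le_nat not_gr0 one_le_numeral)
        have "x = r ^ (j + e) + of_nat (d ^ e - 1) * r ^ (j + e)"
          using de j dpos by (simp add: of_nat_diff algebra_simps)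
        then have "r ^ (j + e) = 0 \<or> of_nat (d ^ e - 1) * r ^ (j + e) = 0"
          using x bM cM unfolding atoms_def by blast
        moreover have "of_nat (d ^ e - 1) \<noteq> (0::rat)" using dpos by (simp only: of_nat_eq_0_iff)
        moreover have "r ^ (j + e) \<noteq> 0" using rpos by simp
        ultimately show False by (metis mult_eq_0_iff)
      qed
      have "(1::rat) \<in> M" using natM[of 1] by simp
      then have "factorizations M 1 \<noteq> {}" using assms(3) unfolding M_def atomic_def by auto
      then obtain z where "set_mset z \<subseteq> atoms M" "sum_mset z = 1" unfolding factorizations_def by blast
      then show False using noat by simp
    qed
    define K where "K = max n d ^ e"
    have atN: "\<forall>k\<in>N. r ^ k \<in> atoms M" using atoms_eq[OF d2 n2 r cop] unfolding M_def by blast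
    have up: "catenary_elem M x \<le> enat K" if "x \<in> M" for x
    proof (rule cat_upper, intro ballI)
      fix z z' assume z: "z \<in> factorizations M x" and z': "z' \<in> factorizations M x"
      have "set_mset z \<subseteq> (\<lambda>k. r ^ k) ` N"
        using z atoms_sub[OF M_def rpos] unfolding factorizations_def by blast
      then obtain Z where ZN: "set_mset Z \<subseteq> N" and zZ: "z = img r Z"
        using mset_preimage unfolding img_def by blast
      have "set_mset z' \<subseteq> (\<lambda>k. r ^ k) ` N"
        using z' atoms_sub[OF M_def rpos] unfolding factorizations_def by blast
      then obtain Z' where Z'N: "set_mset Z' \<subseteq> N" and zZ': "z' = img r Z'"
        using mset_preimage unfolding img_def by blast
      have vZ: "val r Z = x" "val r Z' = x" using z z' zZ zZ' unfolding factorizations_def val_def by auto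
      define J where "J = Max (insert 0 (set_mset (Z + Z')))"
      have bd: "\<forall>k\<in>#Z + Z'. k \<le> J" unfolding J_def by simp
      have "ch r N K Z Z'" unfolding K_def
        using upper_ch[OF d2 n2 r cop addN eN ZN Z'N _ bd] vZ by simp
      then have "has_chain M (val r Z) (enat K) (img r Z) (img r Z')"
        using ch_has_chain ZN atN by blast
      then show "has_chain M x (enat K) z z'" using vZ zZ zZ' by simp
    qed
    have lo: "enat K \<le> catenary_elem M (of_nat (n ^ e))"
    proof (rule cat_lower)
      show "replicate_mset (n ^ e) 1 \<in> factorizations M (of_nat (n ^ e))"
        unfolding factorizations_def using atN N0 by (auto simp: in_replicate_mset)
      show "replicate_mset (d ^ e) (r ^ e) \<in> factorizations M (of_nat (n ^ e))"
        unfolding factorizations_def using atN eN r d2 by (auto simp: in_replicate_mset power_divide)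
      have r1: "r ^ e \<noteq> 1"
      proof
        assume "r ^ e = 1"
        then have "of_nat n ^ e = (of_nat d ^ e :: rat)" using r d2 by (simp add: power_divide)
        then have "n ^ e = d ^ e" by (metis of_nat_eq_iff of_nat_power)
        then have "n = d" using eN by (simp add: power_eq_iff_eq_base)
        then show False using cop d2 by simp
      qed
      have "count (replicate_mset (n ^ e) (1::rat)) 1 \<noteq> count (replicate_mset (d ^ e) (r ^ e)) 1"
        using r1 n2 by simp
      then show "replicate_mset (n ^ e) 1 \<noteq> replicate_mset (d ^ e) (r ^ e)" by metis
      show "\<forall>w\<in>factorizations M (of_nat (n ^ e)). w \<noteq> replicate_mset (n ^ e) 1 \<longrightarrow>
            K \<le> fdist (replicate_mset (n ^ e) 1) w"
        unfolding K_def M_def using lower_dist[OF d2 n2 r cop eN(2) emin] by blast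
    qed
    have "catenary_degree M \<le> enat K" unfolding catenary_degree_def using up by (intro SUP_least) auto
    moreover have "enat K \<le> catenary_degree M" unfolding catenary_degree_def
      using lo natM[of "n ^ e"] by (metis SUP_upper2)
    ultimately show "catenary_degree (exp_puiseux r N) = enat (max (numer r) (denom r) ^ delta0 N)"
      unfolding M_def K_def nd e_def by simp
  qed
qed

end
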